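(* For $i=1,2$ let $X_i$ be a set with a distinguished point $e_i\in X_i$ and let $K_i\colon X_i\times X_i\to\mathbb{R}$ be a kernel with $K_i(x,y)=K_i(y,x)\geq0$ and $K_i(x,x)=0$ that is conditionally strictly negative definite. Let $X=X_1\sqcup X_2/\!\sim$ where $e_1\sim e_2$ (so $X_1,X_2\subseteq X$ with $X_1\cap X_2=\{e_1\}=\{e_2\}$), and define $K\colon X\times X\to\mathbb{R}$ by $K(x,y)=K_1(x,y)$ if $x,y\in X_1$; $K(x,y)=K_1(x,e_1)+K_2(e_2,y)$ if $x\in X_1,y\in X_2$; $K(x,y)=K_2(x,e_2)+K_1(e_1,y)$ if $x\in X_2,y\in X_1$; $K(x,y)=K_2(x,y)$ if $x,y\in X_2$. Then $K$ is well defined, satisfies $K(x,y)=K(y,x)\ge0$, $K(x,x)=0$, and is conditionally strictly negative definite.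
   Context: A kernel $K$ on a set $Y$ is conditionally strictly negative definite if for every finitely supported $\lambda\colon Y\to\mathbb{C}$, $\lambda\neq0$, with $\sum_y\lambda(y)=0$ one has $\sum_{x,y}\lambda(x)\overline{\lambda(y)}K(x,y)<0$. *)

theory Defs
  imports Complex_Main
begin

text \<open>Finitely supported functions on Y are modelled as functions on the ambient type whose
support is finite and contained in Y.\<close>

definition cond_strict_neg_def :: "'a set \<Rightarrow> ('a \<Rightarrow> 'a \<Rightarrow> real) \<Rightarrow> bool" where
  "cond_strict_neg_def Y K \<longleftrightarrow>
     (\<forall>l :: 'a \<Rightarrow> complex.
        finite {x. l x \<noteq> 0} \<and> {x. l x \<noteq> 0} \<subseteq> Y \<and> {x. l x \<noteq> 0} \<noteq> {} \<and>
        (\<Sum>x\<in>{x. l x \<noteq> 0}. l x) = 0 \<longrightarrow>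
        (let s = (\<Sum>x\<in>{x. l x \<noteq> 0}. \<Sum>y\<in>{x. l x \<noteq> 0}. l x * cnj (l y) * complex_of_real (K x y))
         in Im s = 0 \<and> Re s < 0))"

definition wedge_kernel_clauses ::
  "'a set \<Rightarrow> 'a set \<Rightarrow> 'a \<Rightarrow> ('a \<Rightarrow> 'a \<Rightarrow> real) \<Rightarrow> ('a \<Rightarrow> 'a \<Rightarrow> real) \<Rightarrow> ('a \<Rightarrow> 'a \<Rightarrow> real) \<Rightarrow> bool" where
  "wedge_kernel_clauses X1 X2 e K1 K2 K \<longleftrightarrow>
     (\<forall>x\<in>X1. \<forall>y\<in>X1. K x y = K1 x y) \<and>
     (\<forall>x\<in>X1. \<forall>y\<in>X2. K x y = K1 x e + K2 e y) \<and>
     (\<forall>x\<in>X2. \<forall>y\<in>X1. K x y = K2 x e + K1 e y) \<and>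
     (\<forall>x\<in>X2. \<forall>y\<in>X2. K x y = K2 x y)"

end

theory Submission
  imports Defs
begin

definition QQ :: "('a \<Rightarrow> 'a \<Rightarrow> real) \<Rightarrow> ('a \<Rightarrow> complex) \<Rightarrow> 'a set \<Rightarrow> complex" where
  "QQ K l S = (\<Sum>x\<in>S. \<Sum>y\<in>S. l x * cnj (l y) * complex_of_real (K x y))"

lemma QQ_mono:
  assumes "finite S" "{x. l x \<noteq> 0} \<subseteq> A" "A \<subseteq> S"
  shows "QQ K l A = QQ K l S"
proof -
  have fA: "finite A" using assms finite_subset by blast
  have z: "\<And>i. i \<notin> A \<Longrightarrow> l i = 0" using assms(2) by blast
  have "QQ K l A = (\<Sum>x\<in>A. \<Sum>y\<in>S. l x * cnj (l y) * complex_of_real (K x y))"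
    unfolding QQ_def
  proof (rule sum.cong[OF refl])
    fix x assume "x \<in> A"
    show "(\<Sum>y\<in>A. l x * cnj (l y) * complex_of_real (K x y)) = (\<Sum>y\<in>S. l x * cnj (l y) * complex_of_real (K x y))"
      by (rule sum.mono_neutral_left) (use assms in auto)
  qed
  also have "\<dots> = QQ K l S" unfolding QQ_def
    by (rule sum.mono_neutral_left) (use assms z in auto)
  finally show ?thesis .
qed

lemma sum_mono_supp:
  assumes "finite S" "{x. l x \<noteq> 0} \<subseteq> S"
  shows "(\<Sum>x\<in>{x. l x \<noteq> 0}. l x) = (\<Sum>x\<in>S. (l x::complex))"
  by (rule sum.mono_neutral_left) (use assms in auto)

lemma csnd_S:
  assumes c: "cond_strict_neg_def Y K" and fS: "finite S"
    and sS: "{x. l x \<noteq> 0} \<subseteq> S" and sY: "{x. l x \<noteq> 0} \<subseteq> Y"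
    and z: "(\<Sum>x\<in>S. l x) = 0"
  shows "Im (QQ K l S) = 0 \<and> Re (QQ K l S) \<le> 0 \<and> (Re (QQ K l S) = 0 \<longrightarrow> (\<forall>x. l x = 0))"
proof (cases "{x. l x \<noteq> 0} = {}")
  case True
  then have "\<forall>x. l x = 0" by auto
  then show ?thesis by (simp add: QQ_def)
next
  case False
  have fin: "finite {x. l x \<noteq> 0}" using fS sS finite_subset by blast
  have eq: "QQ K l {x. l x \<noteq> 0} = QQ K l S" by (rule QQ_mono[OF fS order_refl sS])
  have z': "(\<Sum>x\<in>{x. l x \<noteq> 0}. l x) = 0" using sum_mono_supp[OF fS sS] z by simp
  from c[unfolded cond_strict_neg_def_def, rule_format, of l] fin sY False z'
  have "Im (QQ K l {x. l x \<noteq> 0}) = 0 \<and> Re (QQ K l {x. l x \<noteq> 0}) < 0"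
    by (simp add: QQ_def Let_def)
  then show ?thesis using eq by auto
qed

lemma push:
  assumes fS: "finite S"
  shows "QQ (\<lambda>x y. F (g x) (g y)) l S = QQ F (\<lambda>u. sum l {x\<in>S. g x = u}) (g ` S)"
proof -
  let ?l = "\<lambda>u. sum l {x\<in>S. g x = u}"
  have inner: "(\<Sum>y\<in>S. l x * cnj (l y) * complex_of_real (F (g x) (g y)))
      = (\<Sum>v\<in>g ` S. l x * cnj (?l v) * complex_of_real (F (g x) v))" for x
  proof -
    have "(\<Sum>y\<in>S. l x * cnj (l y) * complex_of_real (F (g x) (g y)))
       = (\<Sum>v\<in>g ` S. \<Sum>y\<in>{y\<in>S. g y = v}. l x * cnj (l y) * complex_of_real (F (g x) (g y)))"
      by (rule sum.image_gen[OF fS])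
    also have "\<dots> = (\<Sum>v\<in>g ` S. \<Sum>y\<in>{y\<in>S. g y = v}. l x * cnj (l y) * complex_of_real (F (g x) v))"
      by (intro sum.cong refl) auto
    also have "\<dots> = (\<Sum>v\<in>g ` S. l x * cnj (?l v) * complex_of_real (F (g x) v))"
      by (simp add: sum_distrib_left sum_distrib_right)
    finally show ?thesis .
  qed
  have "QQ (\<lambda>x y. F (g x) (g y)) l S = (\<Sum>x\<in>S. \<Sum>v\<in>g ` S. l x * cnj (?l v) * complex_of_real (F (g x) v))"
    unfolding QQ_def using inner by simp
  also have "\<dots> = (\<Sum>u\<in>g ` S. \<Sum>x\<in>{x\<in>S. g x = u}. \<Sum>v\<in>g ` S. l x * cnj (?l v) * complex_of_real (F (g x) v))"
    by (rule sum.image_gen[OF fS])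
  also have "\<dots> = (\<Sum>u\<in>g ` S. \<Sum>x\<in>{x\<in>S. g x = u}. \<Sum>v\<in>g ` S. l x * cnj (?l v) * complex_of_real (F u v))"
    by (intro sum.cong refl) auto
  also have "\<dots> = (\<Sum>u\<in>g ` S. \<Sum>v\<in>g ` S. \<Sum>x\<in>{x\<in>S. g x = u}. l x * cnj (?l v) * complex_of_real (F u v))"
    by (rule sum.cong[OF refl], rule sum.swap)
  also have "\<dots> = QQ F ?l (g ` S)"
    unfolding QQ_def by (simp add: sum_distrib_right del: cnj_sum)
  finally show ?thesis .
qed

lemma pushed_props:
  assumes fS: "finite S" and sub: "g ` S \<subseteq> Y" and z: "(\<Sum>x\<in>S. l x) = (0::complex)"
  shows "finite (g ` S)" "{u. sum l {x\<in>S. g x = u} \<noteq> 0} \<subseteq> g ` S"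
    "{u. sum l {x\<in>S. g x = u} \<noteq> 0} \<subseteq> Y"
    "(\<Sum>u\<in>g ` S. sum l {x\<in>S. g x = u}) = 0"
proof -
  show "finite (g ` S)" using fS by simp
  show 1: "{u. sum l {x\<in>S. g x = u} \<noteq> 0} \<subseteq> g ` S"
  proof
    fix u assume "u \<in> {u. sum l {x\<in>S. g x = u} \<noteq> 0}"
    then have "{x\<in>S. g x = u} \<noteq> {}" by (cases "{x\<in>S. g x = u} = {}") auto
    then show "u \<in> g ` S" by auto
  qed
  then show "{u. sum l {x\<in>S. g x = u} \<noteq> 0} \<subseteq> Y" using sub by blast
  show "(\<Sum>u\<in>g ` S. sum l {x\<in>S. g x = u}) = 0"
    using sum.image_gen[OF fS, of l g] z by simp
qed

theorem mainTheorem6: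
  fixes X1 X2 :: "'a set" and e :: 'a and K1 K2 :: "'a \<Rightarrow> 'a \<Rightarrow> real"
  assumes inter: "X1 \<inter> X2 = {e}"
    and K1_sym: "\<forall>x\<in>X1. \<forall>y\<in>X1. K1 x y = K1 y x \<and> K1 x y \<ge> 0"
    and K1_diag: "\<forall>x\<in>X1. K1 x x = 0"
    and K1_csnd: "cond_strict_neg_def X1 K1"
    and K2_sym: "\<forall>x\<in>X2. \<forall>y\<in>X2. K2 x y = K2 y x \<and> K2 x y \<ge> 0"
    and K2_diag: "\<forall>x\<in>X2. K2 x x = 0"
    and K2_csnd: "cond_strict_neg_def X2 K2"
  shows "(\<exists>K. wedge_kernel_clauses X1 X2 e K1 K2 K) \<and>
         (\<forall>K. wedge_kernel_clauses X1 X2 e K1 K2 K \<longrightarrow>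
            (\<forall>x\<in>X1 \<union> X2. \<forall>y\<in>X1 \<union> X2. K x y = K y x \<and> K x y \<ge> 0) \<and>
            (\<forall>x\<in>X1 \<union> X2. K x x = 0) \<and>
            cond_strict_neg_def (X1 \<union> X2) K)"
proof -
  have e1: "e \<in> X1" and e2: "e \<in> X2" using inter by auto
  have ee: "\<And>x. x \<in> X1 \<Longrightarrow> x \<in> X2 \<Longrightarrow> x = e" using inter by auto
  define p1 where "p1 x = (if x \<in> X1 then x else e)" for x
  define p2 where "p2 x = (if x \<in> X1 then e else x)" for x
  have p1X: "p1 x \<in> X1" for x using e1 by (simp add: p1_def)
  have p2X: "x \<in> X1 \<union> X2 \<Longrightarrow> p2 x \<in> X2" for x using e2 by (auto simp: p2_def)
  have ex: "\<exists>K. wedge_kernel_clauses X1 X2 e K1 K2 K"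
  proof
    show "wedge_kernel_clauses X1 X2 e K1 K2 (\<lambda>x y. if x \<in> X1 \<and> y \<in> X1 then K1 x y
       else if x \<in> X1 \<and> y \<in> X2 then K1 x e + K2 e y
       else if x \<in> X2 \<and> y \<in> X1 then K2 x e + K1 e y else K2 x y)" (is "wedge_kernel_clauses _ _ _ _ _ ?K")
      unfolding wedge_kernel_clauses_def
    proof (intro conjI ballI)
      fix x y
      show "x \<in> X1 \<Longrightarrow> y \<in> X1 \<Longrightarrow> ?K x y = K1 x y" by simp
      show "x \<in> X1 \<Longrightarrow> y \<in> X2 \<Longrightarrow> ?K x y = K1 x e + K2 e y"
        using ee[of y] K2_diag e2 by (cases "y \<in> X1") simp_all
      show "x \<in> X2 \<Longrightarrow> y \<in> X1 \<Longrightarrow> ?K x y = K2 x e + K1 e y"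
        using ee[of x] K2_diag e2 by (cases "x \<in> X1") simp_all
      show "x \<in> X2 \<Longrightarrow> y \<in> X2 \<Longrightarrow> ?K x y = K2 x y"
        using ee[of x] ee[of y] K2_diag e2 K1_diag e1 by (cases "x \<in> X1"; cases "y \<in> X1") simp_all
    qed
  qed
  have rest: "(\<forall>x\<in>X1 \<union> X2. \<forall>y\<in>X1 \<union> X2. K x y = K y x \<and> K x y \<ge> 0) \<and>
            (\<forall>x\<in>X1 \<union> X2. K x x = 0) \<and>
            cond_strict_neg_def (X1 \<union> X2) K" if W: "wedge_kernel_clauses X1 X2 e K1 K2 K" for K
  proof -
    have form: "K x y = K1 (p1 x) (p1 y) + K2 (p2 x) (p2 y)" if "x \<in> X1 \<union> X2" "y \<in> X1 \<union> X2" for x y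
    proof -
      have c: "\<forall>x\<in>X1. \<forall>y\<in>X1. K x y = K1 x y" "\<forall>x\<in>X1. \<forall>y\<in>X2. K x y = K1 x e + K2 e y"
        "\<forall>x\<in>X2. \<forall>y\<in>X1. K x y = K2 x e + K1 e y" "\<forall>x\<in>X2. \<forall>y\<in>X2. K x y = K2 x y"
        using W unfolding wedge_kernel_clauses_def by blast+
      have k1: "K1 e e = 0" and k2: "K2 e e = 0" using e1 e2 K1_diag K2_diag by auto
      show ?thesis using that
        by (cases "x \<in> X1"; cases "y \<in> X1") (simp_all add: p1_def p2_def c k1 k2)
    qed
    have A: "\<forall>x\<in>X1 \<union> X2. \<forall>y\<in>X1 \<union> X2. K x y = K y x \<and> K x y \<ge> 0"
    proof (intro ballI)
      fix x y assume x: "x \<in> X1 \<union> X2" and y: "y \<in> X1 \<union> X2"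
      show "K x y = K y x \<and> K x y \<ge> 0"
      proof -
        have a: "K1 (p1 x) (p1 y) = K1 (p1 y) (p1 x)" "K1 (p1 x) (p1 y) \<ge> 0"
          using K1_sym p1X by blast+
        have b: "K2 (p2 x) (p2 y) = K2 (p2 y) (p2 x)" "K2 (p2 x) (p2 y) \<ge> 0"
          using K2_sym p2X[OF x] p2X[OF y] by blast+
        show ?thesis unfolding form[OF x y] form[OF y x] using a b by simp
      qed
    qed
    have B: "\<forall>x\<in>X1 \<union> X2. K x x = 0"
      using form K1_diag K2_diag p1X p2X by simp
    have C: "cond_strict_neg_def (X1 \<union> X2) K"
      unfolding cond_strict_neg_def_def
    proof (intro allI impI)
      fix l :: "'a \<Rightarrow> complex"
      assume H: "finite {x. l x \<noteq> 0} \<and> {x. l x \<noteq> 0} \<subseteq> X1 \<union> X2 \<and> {x. l x \<noteq> 0} \<noteq> {} \<and>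
        (\<Sum>x\<in>{x. l x \<noteq> 0}. l x) = 0"
      define D where "D = {x. l x \<noteq> 0}"
      define S where "S = insert e D"
      have fD: "finite D" and DX: "D \<subseteq> X1 \<union> X2" and Dne: "D \<noteq> {}" and zD: "(\<Sum>x\<in>D. l x) = 0"
        using H by (auto simp: D_def)
      have fS: "finite S" using fD by (simp add: S_def)
      have SX: "S \<subseteq> X1 \<union> X2" using DX e1 by (auto simp: S_def)
      have DS: "{x. l x \<noteq> 0} \<subseteq> S" by (auto simp: S_def D_def)
      have zS: "(\<Sum>x\<in>S. l x) = 0" using sum_mono_supp[OF fS DS] zD by (simp add: D_def)
      have q0: "QQ K l D = QQ K l S" unfolding D_def by (rule QQ_mono[OF fS order_refl DS])
      have q1: "QQ K l S = QQ (\<lambda>x y. K1 (p1 x) (p1 y)) l S + QQ (\<lambda>x y. K2 (p2 x) (p2 y)) l S"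
        unfolding QQ_def sum.distrib[symmetric]
      proof (intro sum.cong refl)
        fix x y assume "x \<in> S" "y \<in> S"
        then have "x \<in> X1 \<union> X2" "y \<in> X1 \<union> X2" using SX by auto
        then show "l x * cnj (l y) * complex_of_real (K x y) =
           l x * cnj (l y) * complex_of_real (K1 (p1 x) (p1 y)) + l x * cnj (l y) * complex_of_real (K2 (p2 x) (p2 y))"
          using form by (simp add: distrib_left)
      qed
      define l1 where "l1 u = sum l {x\<in>S. p1 x = u}" for u
      define l2 where "l2 u = sum l {x\<in>S. p2 x = u}" for u
      have q2: "QQ K l S = QQ K1 l1 (p1 ` S) + QQ K2 l2 (p2 ` S)"
      proof -
        have "l1 = (\<lambda>u. sum l {x\<in>S. p1 x = u})" "l2 = (\<lambda>u. sum l {x\<in>S. p2 x = u})"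
          by (simp_all add: l1_def l2_def fun_eq_iff)
        then show ?thesis using q1 push[OF fS, of K1 p1 l] push[OF fS, of K2 p2 l] by simp
      qed
      have s1: "p1 ` S \<subseteq> X1" using p1X by auto
      have s2: "p2 ` S \<subseteq> X2" using p2X SX by auto
      note P1 = pushed_props[OF fS s1 zS, folded l1_def]
      note P2 = pushed_props[OF fS s2 zS, folded l2_def]
      have r1: "Im (QQ K1 l1 (p1 ` S)) = 0 \<and> Re (QQ K1 l1 (p1 ` S)) \<le> 0 \<and> (Re (QQ K1 l1 (p1 ` S)) = 0 \<longrightarrow> (\<forall>x. l1 x = 0))"
        by (rule csnd_S[OF K1_csnd P1(1) P1(2) P1(3) P1(4)])
      have r2: "Im (QQ K2 l2 (p2 ` S)) = 0 \<and> Re (QQ K2 l2 (p2 ` S)) \<le> 0 \<and> (Re (QQ K2 l2 (p2 ` S)) = 0 \<longrightarrow> (\<forall>x. l2 x = 0))"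
        by (rule csnd_S[OF K2_csnd P2(1) P2(2) P2(3) P2(4)])
      have neg: "Re (QQ K l D) < 0"
      proof (rule ccontr)
        assume "\<not> Re (QQ K l D) < 0"
        then have "Re (QQ K1 l1 (p1 ` S)) = 0" "Re (QQ K2 l2 (p2 ` S)) = 0"
          using q0 q2 r1 r2 by auto
        then have L1: "\<forall>x. l1 x = 0" and L2: "\<forall>x. l2 x = 0" using r1 r2 by auto
        have off: "l x = 0" if "x \<noteq> e" for x
        proof (cases "x \<in> S")
          case False then show ?thesis by (auto simp: S_def D_def)
        next
          case True
          show ?thesis
          proof (cases "x \<in> X1")
            case True
            have "{y\<in>S. p1 y = x} = {x}" using True \<open>x \<in> S\<close> \<open>x \<noteq> e\<close> by (auto simp: p1_def)
            moreover have "l1 x = 0" using L1 by blast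
            ultimately show ?thesis by (simp add: l1_def)
          next
            case False
            have "{y\<in>S. p2 y = x} = {x}" using False \<open>x \<in> S\<close> \<open>x \<noteq> e\<close> e1 by (auto simp: p2_def)
            moreover have "l2 x = 0" using L2 by blast
            ultimately show ?thesis by (simp add: l2_def)
          qed
        qed
        have "(\<Sum>x\<in>S. l x) = l e + (\<Sum>x\<in>S - {e}. l x)"
          using fS by (simp add: S_def sum.insert_remove)
        also have "(\<Sum>x\<in>S - {e}. l x) = 0" using off by (intro sum.neutral) auto
        finally have "l e = 0" using zS by simp
        then have "\<forall>x. l x = 0" using off by metis
        then show False using Dne by (simp add: D_def)
      qed
      have im: "Im (QQ K l D) = 0" using q0 q2 r1 r2 by simp
      show "let s = \<Sum>x\<in>{x. l x \<noteq> 0}. \<Sum>y\<in>{x. l x \<noteq> 0}. l x * cnj (l y) * complex_of_real (K x y)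
         in Im s = 0 \<and> Re s < 0"
        using neg im by (simp add: QQ_def D_def Let_def)
    qed
    show ?thesis using A B C by blast
  qed
  show ?thesis using ex rest by blast
qed

end
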